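(* Let $C$ be a binary linear $[n,k',d]$ code that contains its dual ($C^\perp\subseteq C$), and let the $[[n,k,d]]$ CSS code with $k=2k'-n$ be constructed from it. Then for every integer $c$ with $0\le c\le \frac{n-k}{2}=n-k'$ there is an $[[n-c,k,d;c]]_{AB}$ EAQEC code obtained from this CSS code by assigning $c$ of its qubits to Bob (deleting the corresponding columns of the $X$- and $Z$-parts of its check matrix).
   Context: CSS construction: if $C$ is a binary $[n,k',d]$ code with $C^\perp\subseteq C$ and parity check matrix $P$ (of size $(n-k')\times n$), the stabilizer group generated by the $X$-type operators $X^{r}$ and the $Z$-type operators $Z^{r}$ for the rows $r$ of $P$ defines an $[[n,2k'-n,d]]$ stabilizer code. Its check matrix can be brought to the standard form $\left[\begin{array}{cc|cc} A & I_{s\times s} & 0 & 0\\ 0&0&B& I_{(n-k-s)\times(n-k-s)}\end{array}\right]$. Pauli operators are considered up to phase; weight is the number of non-identity tensor factors. An $[[n',k,d;c]]$ entanglement-assisted (EAQEC) code: Alice and Bob share $c$ Bell pairs; Alice encodes $k$ qubits into $n'$ qubits (including her halves of the ebits). It is specified by a simplified stabilizer group $\mathcal S'$ on Alice's $n'$ qubits generated by $g'_1,h'_1,\dots,g'_c,h'_c,g'_{c+1},\dots,g'_{n'-k-c}$ with $g'_i,h'_i$ anticommuting for $i\le c$ and all other pairs commuting; the encoded state on all $n'+c$ qubits is stabilized by $g'_i\otimes Z_i$, $h'_i\otimes X_i$ ($i\le c$, acting on Bob's $i$-th qubit) and $g'_j\otimes I$ ($j>c$). Removing the columns of the last $c$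 qubits from a standard stabilizer code's check matrix whose corresponding generators are paired as $g'_i\otimes Z_i$, $h'_i\otimes X_i$ gives such a simplified group. The subscript $AB$ means the stabilizer group on all $n'+c$ qubits is that of a standard $[[n'+c,k,d]]$ stabilizer code, so the code corrects errors of weight up to $\lfloor (d-1)/2\rfloor$ on Alice's and Bob's qubits together. *)

theory Defs
  imports Main
begin

text \<open>A binary vector of length n is a function nat => bool vanishing outside {..<n}.
  Addition over GF(2) is pointwise exclusive or.\<close>

type_synonym bvec = "nat \<Rightarrow> bool"

definition vzero :: bvec where "vzero = (\<lambda>_. False)"

definition vecs :: "nat \<Rightarrow> bvec set" where
  "vecs n = {v. \<forall>i. n \<le> i \<longrightarrow> \<not> v i}"

definition vadd :: "bvec \<Rightarrow> bvec \<Rightarrow> bvec" where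
  "vadd v w = (\<lambda>i. v i \<noteq> w i)"

text \<open>GF(2) inner product of length-n vectors: True iff it equals 1.\<close>
definition bdot :: "nat \<Rightarrow> bvec \<Rightarrow> bvec \<Rightarrow> bool" where
  "bdot n v w \<longleftrightarrow> odd (card {i\<in>{..<n}. v i \<and> w i})"

definition hweight :: "nat \<Rightarrow> bvec \<Rightarrow> nat" where
  "hweight n v = card {i\<in>{..<n}. v i}"

definition linear_code :: "nat \<Rightarrow> bvec set \<Rightarrow> bool" where
  "linear_code n C \<longleftrightarrow> C \<subseteq> vecs n \<and> vzero \<in> C \<and> (\<forall>v\<in>C. \<forall>w\<in>C. vadd v w \<in> C)"

definition min_dist :: "nat \<Rightarrow> bvec set \<Rightarrow> nat \<Rightarrow> bool" where
  "min_dist n C d \<longleftrightarrow> (\<exists>v\<in>C. v \<noteq> vzero \<and> hweight n v = d) \<and>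
                       (\<forall>v\<in>C. v \<noteq> vzero \<longrightarrow> d \<le> hweight n v)"

text \<open>Binary linear [n,k,d] code: dimension k means 2^k codewords.\<close>
definition binary_code :: "nat \<Rightarrow> nat \<Rightarrow> nat \<Rightarrow> bvec set \<Rightarrow> bool" where
  "binary_code n k d C \<longleftrightarrow> linear_code n C \<and> card C = 2 ^ k \<and> min_dist n C d"

definition dual_code :: "nat \<Rightarrow> bvec set \<Rightarrow> bvec set" where
  "dual_code n C = {v \<in> vecs n. \<forall>w\<in>C. \<not> bdot n v w}"

text \<open>P is an (n-k) x n parity check matrix of C (given as its list of rows).\<close>
definition parity_check :: "nat \<Rightarrow> nat \<Rightarrow> bvec set \<Rightarrow> bvec list \<Rightarrow> bool" where
  "parity_check n k C P \<longleftrightarrow> length P = n - k \<and> set P \<subseteq> vecs n \<and>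
      C = {v \<in> vecs n. \<forall>r\<in>set P. \<not> bdot n r v}"

section \<open>Pauli operators up to phase (binary symplectic representation)\<close>

type_synonym pauli = "bvec \<times> bvec"  \<comment> \<open>(X-part, Z-part)\<close>

definition pI :: pauli where "pI = (vzero, vzero)"
definition pX :: "bvec \<Rightarrow> pauli" where "pX v = (v, vzero)"
definition pZ :: "bvec \<Rightarrow> pauli" where "pZ v = (vzero, v)"

definition pmul :: "pauli \<Rightarrow> pauli \<Rightarrow> pauli" where
  "pmul p q = (vadd (fst p) (fst q), vadd (snd p) (snd q))"

definition paulis :: "nat \<Rightarrow> pauli set" where
  "paulis n = vecs n \<times> vecs n"

definition pweight :: "nat \<Rightarrow> pauli \<Rightarrow> nat" where
  "pweight n p = card {i\<in>{..<n}. fst p i \<or> snd p i}"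

definition anticomm_on :: "nat set \<Rightarrow> pauli \<Rightarrow> pauli \<Rightarrow> bool" where
  "anticomm_on A p q \<longleftrightarrow>
     odd (card {i\<in>A. fst p i \<and> snd q i} + card {i\<in>A. snd p i \<and> fst q i})"

definition anticomm :: "nat \<Rightarrow> pauli \<Rightarrow> pauli \<Rightarrow> bool" where
  "anticomm n p q \<longleftrightarrow> anticomm_on {..<n} p q"

definition prestrict :: "nat set \<Rightarrow> pauli \<Rightarrow> pauli" where
  "prestrict B p = (\<lambda>i. i \<in> B \<and> fst p i, \<lambda>i. i \<in> B \<and> snd p i)"

inductive_set generated :: "pauli set \<Rightarrow> pauli set" for G where
  gen_id: "pI \<in> generated G"
| gen_mul: "g \<in> G \<Longrightarrow> p \<in> generated G \<Longrightarrow> pmul g p \<in> generated G"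

definition centralizer :: "nat \<Rightarrow> pauli set \<Rightarrow> pauli set" where
  "centralizer n S = {p \<in> paulis n. \<forall>s\<in>S. \<not> anticomm n p s}"

text \<open>S is the stabilizer group of an [[n,k,d]] stabilizer code (distance = minimal
  weight of an element of N(S) \ S; vacuous when that set is empty).\<close>
definition stabilizer_code :: "nat \<Rightarrow> nat \<Rightarrow> nat \<Rightarrow> pauli set \<Rightarrow> bool" where
  "stabilizer_code n k d S \<longleftrightarrow>
     S \<subseteq> paulis n \<and> (\<forall>s\<in>S. \<forall>t\<in>S. \<not> anticomm n s t) \<and> k \<le> n \<and>
     card S = 2 ^ (n - k) \<and>
     (\<forall>p\<in>centralizer n S - S. d \<le> pweight n p) \<and>
     (centralizer n S - S \<noteq> {} \<longrightarrow> (\<exists>p\<in>centralizer n S - S. pweight n p = d))"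

definition css_stabilizer :: "bvec list \<Rightarrow> pauli set" where
  "css_stabilizer P = generated ({pX r | r. r \<in> set P} \<union> {pZ r | r. r \<in> set P})"

text \<open>Generators on all n'+c qubits: g i, h i for i<c and f j for c \<le> j < n'-k
  (0-based version of g'_1,h'_1,...,g'_c,h'_c,g'_{c+1},...,g'_{n'-k}; n'-k-c isotropic generators).
  Bob's qubits form the set B, with b i being Bob's i-th qubit; Alice's qubits are
  the remaining ones in {..<n'+c}.\<close>
definition ea_gens :: "nat \<Rightarrow> nat \<Rightarrow> nat \<Rightarrow> (nat \<Rightarrow> pauli) \<Rightarrow> (nat \<Rightarrow> pauli) \<Rightarrow> (nat \<Rightarrow> pauli)
                       \<Rightarrow> pauli set" where
  "ea_gens n' k c g h f =
     {g i | i. i < c} \<union> {h i | i. i < c} \<union> {f j | j. c \<le> j \<and> j < n' - k}"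

definition eaqec_AB :: "nat \<Rightarrow> nat \<Rightarrow> nat \<Rightarrow> nat \<Rightarrow> nat set \<Rightarrow> (nat \<Rightarrow> nat)
    \<Rightarrow> (nat \<Rightarrow> pauli) \<Rightarrow> (nat \<Rightarrow> pauli) \<Rightarrow> (nat \<Rightarrow> pauli) \<Rightarrow> bool" where
  "eaqec_AB n' k d c B b g h f \<longleftrightarrow>
     (let N = n' + c; A = {..<N} - B; m = n' - k in
       k + c \<le> n' \<and>
       B \<subseteq> {..<N} \<and> card B = c \<and> bij_betw b {..<c} B \<and>
       ea_gens n' k c g h f \<subseteq> paulis N \<and>
       \<comment> \<open>Bob's parts: g'_i \<otimes> Z_i, h'_i \<otimes> X_i, g'_j \<otimes> I\<close>
       (\<forall>i<c. prestrict B (g i) = pZ (\<lambda>l. l = b i) \<and> prestrict B (h i) = pX (\<lambda>l. l = b i)) \<and>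
       (\<forall>j. c \<le> j \<and> j < m \<longrightarrow> prestrict B (f j) = pI) \<and>
       \<comment> \<open>simplified group on Alice's qubits: g'_i, h'_i anticommute, all other pairs commute\<close>
       (\<forall>i<c. anticomm_on A (g i) (h i)) \<and>
       (\<forall>i<c. \<forall>j<c. \<not> anticomm_on A (g i) (g j) \<and> \<not> anticomm_on A (h i) (h j) \<and>
                     (i \<noteq> j \<longrightarrow> \<not> anticomm_on A (g i) (h j))) \<and>
       (\<forall>i<c. \<forall>j. c \<le> j \<and> j < m \<longrightarrow>
                 \<not> anticomm_on A (g i) (f j) \<and> \<not> anticomm_on A (h i) (f j)) \<and>
       (\<forall>i j. c \<le> i \<and> i < m \<and> c \<le> j \<and> j < m \<longrightarrow> \<not> anticomm_on A (f i) (f j)) \<and>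
       \<comment> \<open>subscript AB: full group is an [[n'+c,k,d]] stabilizer code\<close>
       stabilizer_code N k d (generated (ea_gens n' k c g h f)))"

end

theory Submission
  imports Defs
begin

inductive_set vspan :: "bvec set \<Rightarrow> bvec set" for A where
  vs_zero: "vzero \<in> vspan A"
| vs_add: "a \<in> A \<Longrightarrow> v \<in> vspan A \<Longrightarrow> vadd a v \<in> vspan A"

lemma vadd_zero_left[simp]: "vadd vzero v = v" by (simp add: vadd_def vzero_def)
lemma vadd_zero_right[simp]: "vadd v vzero = v" by (simp add: vadd_def vzero_def)
lemma vadd_assoc: "vadd (vadd a b) c = vadd a (vadd b c)" by (auto simp: vadd_def fun_eq_iff)
lemma vadd_comm: "vadd a b = vadd b a" by (auto simp: vadd_def fun_eq_iff)
lemma vadd_cancel[simp]: "vadd (vadd a b) b = a" by (auto simp: vadd_def fun_eq_iff)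
lemma vadd_cancel2[simp]: "vadd a (vadd a b) = b" by (auto simp: vadd_def fun_eq_iff)

lemma vspan_base: "a \<in> A \<Longrightarrow> a \<in> vspan A"
  using vs_add[OF _ vs_zero, of a A] by simp

lemma vspan_add: "u \<in> vspan A \<Longrightarrow> v \<in> vspan A \<Longrightarrow> vadd u v \<in> vspan A"
  by (induction u rule: vspan.induct) (auto simp: vadd_assoc intro: vs_add)

lemma vspan_sub: "A \<subseteq> vspan B \<Longrightarrow> vspan A \<subseteq> vspan B"
proof
  fix x assume "x \<in> vspan A" "A \<subseteq> vspan B" then show "x \<in> vspan B"
    by (induction x rule: vspan.induct) (auto intro: vs_zero vspan_add)
qed

lemma vspan_eqI: "A \<subseteq> vspan B \<Longrightarrow> B \<subseteq> vspan A \<Longrightarrow> vspan A = vspan B"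
  using vspan_sub by blast

lemma vspan_in_code:
  assumes "vzero \<in> C" "\<forall>v\<in>C. \<forall>w\<in>C. vadd v w \<in> C" "A \<subseteq> C" shows "vspan A \<subseteq> C"
proof
  fix x assume "x \<in> vspan A" then show "x \<in> C" by induction (use assms in auto)
qed

lemma vadd_vecs: "u \<in> vecs n \<Longrightarrow> v \<in> vecs n \<Longrightarrow> vadd u v \<in> vecs n"
  by (auto simp: vecs_def vadd_def)
lemma vzero_vecs: "vzero \<in> vecs n" by (auto simp: vecs_def vzero_def)

lemma vspan_insert: "vspan (insert a A) \<subseteq> vspan A \<union> vadd a ` vspan A"
proof
  fix x assume "x \<in> vspan (insert a A)" then show "x \<in> vspan A \<union> vadd a ` vspan A"
  proof induction
    case vs_zero then show ?case by (auto intro: vspan.vs_zero)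
  next
    case (vs_add b v)
    from vs_add.hyps(1) show ?case
    proof
      assume "b = a"
      with vs_add.IH show ?thesis by auto
    next
      assume bA: "b \<in> A"
      from vs_add.IH show ?thesis
      proof
        assume "v \<in> vspan A" then show ?thesis using bA by (auto intro: vspan.vs_add)
      next
        assume "v \<in> vadd a ` vspan A"
        then obtain w where w: "w \<in> vspan A" "v = vadd a w" by auto
        have "vadd b v = vadd a (vadd b w)" using w by (metis vadd_assoc vadd_comm)
        moreover have "vadd b w \<in> vspan A" using bA w by (auto intro: vspan.vs_add)
        ultimately show ?thesis by auto
      qed
    qed
  qed
qed

lemma vspan_empty: "vspan {} = {vzero}"
proof
  show "vspan {} \<subseteq> {vzero}"
  proof fix x assume "x \<in> vspan {}" then show "x \<in> {vzero}" by induction auto qed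
qed (auto intro: vs_zero)

lemma vspan_card: "finite A \<Longrightarrow> finite (vspan A) \<and> card (vspan A) \<le> 2 ^ card A"
proof (induction rule: finite_induct)
  case empty then show ?case by (simp add: vspan_empty)
next
  case (insert a A)
  have f: "finite (vspan A \<union> vadd a ` vspan A)" using insert by auto
  have "card (vspan (insert a A)) \<le> card (vspan A \<union> vadd a ` vspan A)"
    using card_mono[OF f vspan_insert] .
  also have "\<dots> \<le> card (vspan A) + card (vadd a ` vspan A)" by (rule card_Un_le)
  also have "\<dots> \<le> card (vspan A) + card (vspan A)" using card_image_le insert by auto
  also have "\<dots> \<le> 2 ^ card (insert a A)" using insert by simp
  finally show ?case using f vspan_insert finite_subset by blast
qed

lemma gen_css: "generated (pX ` A \<union> pZ ` A') = vspan A \<times> vspan A'"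
proof
  show "generated (pX ` A \<union> pZ ` A') \<subseteq> vspan A \<times> vspan A'"
  proof
    fix p assume "p \<in> generated (pX ` A \<union> pZ ` A')"
    then show "p \<in> vspan A \<times> vspan A'"
      by induction (auto simp: pI_def pmul_def pX_def pZ_def intro: vs_zero vs_add)
  qed
  show "vspan A \<times> vspan A' \<subseteq> generated (pX ` A \<union> pZ ` A')"
  proof clarify
    fix u v assume u: "u \<in> vspan A" and v: "v \<in> vspan A'"
    have "(vzero, v) \<in> generated (pX ` A \<union> pZ ` A')" using v
    proof induction
      case vs_zero then show ?case using gen_id by (simp add: pI_def)
    next
      case (vs_add a w)
      have "pmul (pZ a) (vzero, w) \<in> generated (pX ` A \<union> pZ ` A')"
        using vs_add by (intro gen_mul) auto
      then show ?case by (simp add: pmul_def pZ_def)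
    qed
    with u show "(u, v) \<in> generated (pX ` A \<union> pZ ` A')"
    proof induction
      case vs_zero then show ?case by simp
    next
      case (vs_add a w)
      have "pmul (pX a) (w, v) \<in> generated (pX ` A \<union> pZ ` A')"
        using vs_add by (intro gen_mul) auto
      then show ?case by (simp add: pmul_def pX_def)
    qed
  qed
qed

lemma card_split: "A \<inter> B = {} \<Longrightarrow> finite A \<Longrightarrow> finite B \<Longrightarrow>
   card {i\<in>A \<union> B. P i} = card {i\<in>A. P i} + card {i\<in>B. P i}"
proof -
  assume "A \<inter> B = {}" "finite A" "finite B"
  moreover have "{i\<in>A \<union> B. P i} = {i\<in>A. P i} \<union> {i\<in>B. P i}" by auto
  ultimately show ?thesis by (simp add: card_Un_disjoint disjoint_iff)
qed

lemma anticomm_split: "A \<inter> B = {} \<Longrightarrow> finite A \<Longrightarrow> finite B \<Longrightarrow>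
   anticomm_on (A \<union> B) p q = (anticomm_on A p q \<noteq> anticomm_on B p q)"
proof -
  assume h: "A \<inter> B = {}" "finite A" "finite B"
  show ?thesis unfolding anticomm_on_def
    using card_split[OF h, of "\<lambda>i. fst p i \<and> snd q i"] card_split[OF h, of "\<lambda>i. snd p i \<and> fst q i"]
    by presburger
qed

lemma ac_ZZ[simp]: "anticomm_on B (pZ x) (pZ y) = False"
  by (simp add: anticomm_on_def pZ_def vzero_def)
lemma ac_XX[simp]: "anticomm_on B (pX x) (pX y) = False"
  by (simp add: anticomm_on_def pX_def vzero_def)
lemma ac_ZX[simp]: "anticomm_on B (pZ x) (pX y) = odd (card {i\<in>B. x i \<and> y i})"
  by (simp add: anticomm_on_def pX_def pZ_def vzero_def)
lemma ac_XZ[simp]: "anticomm_on B (pX x) (pZ y) = odd (card {i\<in>B. x i \<and> y i})"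
  by (simp add: anticomm_on_def pX_def pZ_def vzero_def)


lemma elim:
  assumes Q: "set Q \<subseteq> vecs n" and cardQ: "card (vspan (set Q)) = 2 ^ length Q"
  shows "c \<le> length Q \<Longrightarrow> \<exists>bs xs K. (\<forall>i<c. \<forall>j<c. xs i (bs j) = (i = j)) \<and>
     (\<forall>k\<in>set K. \<forall>j<c. \<not> k (bs j)) \<and> length K = length Q - c \<and>
     xs ` {..<c} \<subseteq> vecs n \<and> set K \<subseteq> vecs n \<and>
     vspan (xs ` {..<c} \<union> set K) = vspan (set Q)"
proof (induction c)
  case 0
  show ?case by (rule exI[of _ undefined], rule exI[of _ undefined], rule exI[of _ Q]) (use Q in auto)
next
  case (Suc c)
  then obtain bs xs K where
    P1: "\<forall>i<c. \<forall>j<c. xs i (bs j) = (i = j)" and P2: "\<forall>k\<in>set K. \<forall>j<c. \<not> k (bs j)"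
    and P3: "length K = length Q - c" and P4: "xs ` {..<c} \<subseteq> vecs n"
    and P5: "set K \<subseteq> vecs n" and P6: "vspan (xs ` {..<c} \<union> set K) = vspan (set Q)" by auto
  have "\<exists>k\<in>set K. k \<noteq> vzero"
  proof (rule ccontr)
    assume "\<not> ?thesis"
    then have "set K \<subseteq> {vzero}" by auto
    then have "vspan (xs ` {..<c} \<union> set K) = vspan (xs ` {..<c})"
      by (intro vspan_eqI) (auto intro: vspan_base vs_zero)
    moreover have "card (vspan (xs ` {..<c})) \<le> 2 ^ card (xs ` {..<c})" using vspan_card by blast
    moreover have "card (xs ` {..<c}) \<le> c" using card_image_le by (metis card_lessThan finite_lessThan)
    moreover have "c < length Q" using Suc.prems by simp
    ultimately have "card (vspan (set Q)) \<le> 2 ^ c" using P6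
      by (metis le_trans power_increasing_iff one_less_numeral_iff semiring_norm(76))
    moreover have "(2::nat) ^ c < 2 ^ length Q" using \<open>c < length Q\<close> by simp
    ultimately have "card (vspan (set Q)) < 2 ^ length Q" by (rule le_less_trans)
    then show False using cardQ by simp
  qed
  then obtain k where kK: "k \<in> set K" and knz: "k \<noteq> vzero" by blast
  then obtain b where kb: "k b" by (auto simp: vzero_def fun_eq_iff)
  define bs' where "bs' = bs(c := b)"
  define xs' where "xs' = (\<lambda>i. if i = c then k else if xs i b then vadd (xs i) k else xs i)"
  define red where "red = (\<lambda>k'. if k' b then vadd k' k else k')"
  define K' where "K' = map red (remove1 k K)"
  have rs: "set (remove1 k K) \<subseteq> set K" by (rule set_remove1_subset)
  show ?case
  proof (intro exI[of _ bs'] exI[of _ xs'] exI[of _ K'] conjI)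
    show "\<forall>i<Suc c. \<forall>j<Suc c. xs' i (bs' j) = (i = j)"
    proof (intro allI impI)
      fix i j assume i: "i < Suc c" and j: "j < Suc c"
      have kbs: "\<And>j. j < c \<Longrightarrow> \<not> k (bs j)" using P2 kK by blast
      show "xs' i (bs' j) = (i = j)"
      proof (cases "i = c")
        case True
        then show ?thesis using j kb kbs by (cases "j = c") (auto simp: xs'_def bs'_def)
      next
        case False
        then have ic: "i < c" using i by simp
        show ?thesis
        proof (cases "j = c")
          case True
          then show ?thesis using ic kb by (simp add: xs'_def bs'_def vadd_def)
        next
          case False
          then have jc: "j < c" using j by simp
          then show ?thesis using ic P1 kbs[OF jc] \<open>i \<noteq> c\<close> False
            by (simp add: xs'_def bs'_def vadd_def)
        qed
      qed
    qed
    show "\<forall>k'\<in>set K'. \<forall>j<Suc c. \<not> k' (bs' j)"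
    proof (intro ballI allI impI)
      fix x j assume x: "x \<in> set K'" and j: "j < Suc c"
      then obtain y where y: "y \<in> set K" "x = red y" using rs by (auto simp: K'_def)
      have kbs: "\<And>j. j < c \<Longrightarrow> \<not> k (bs j)" using P2 kK by blast
      have ybs: "\<And>j. j < c \<Longrightarrow> \<not> y (bs j)" using P2 y by blast
      show "\<not> x (bs' j)"
      proof (cases "j = c")
        case True then show ?thesis using y kb by (simp add: red_def bs'_def vadd_def)
      next
        case False then have "j < c" using j by simp
        then show ?thesis using y kbs ybs False by (simp add: red_def bs'_def vadd_def)
      qed
    qed
    show "length K' = length Q - Suc c" using P3 kK by (simp add: K'_def length_remove1)
    show "xs' ` {..<Suc c} \<subseteq> vecs n"
    proof
      fix x assume "x \<in> xs' ` {..<Suc c}"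
      then obtain i where i: "i < Suc c" "x = xs' i" by auto
      have kv: "k \<in> vecs n" using P5 kK by auto
      show "x \<in> vecs n"
      proof (cases "i = c")
        case True then show ?thesis using i kv by (simp add: xs'_def)
      next
        case False then have "xs i \<in> vecs n" using i P4 by auto
        then show ?thesis using i kv False by (simp add: xs'_def vadd_vecs)
      qed
    qed
    show "set K' \<subseteq> vecs n"
    proof
      fix x assume "x \<in> set K'"
      then obtain y where y: "y \<in> set K" "x = red y" using rs by (auto simp: K'_def)
      then show "x \<in> vecs n" using P5 kK by (auto simp: red_def intro: vadd_vecs)
    qed
    show "vspan (xs' ` {..<Suc c} \<union> set K') = vspan (set Q)"
      unfolding P6[symmetric]
    proof (rule vspan_eqI)
      let ?O = "xs ` {..<c} \<union> set K"
      let ?N = "xs' ` {..<Suc c} \<union> set K'"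
      have kO: "k \<in> vspan ?O" using kK by (auto intro: vspan_base)
      show "?N \<subseteq> vspan ?O"
      proof
        fix x assume "x \<in> ?N"
        then consider (a) i where "i < Suc c" "x = xs' i" | (b) k' where "k' \<in> set K" "x = red k'"
          using rs unfolding K'_def by auto
        then show "x \<in> vspan ?O"
        proof cases
          case a
          show ?thesis
          proof (cases "i = c")
            case True then show ?thesis using a kO by (simp add: xs'_def)
          next
            case False
            then have xi: "xs i \<in> vspan ?O" using a by (intro vspan_base) auto
            show ?thesis using a False xi kO vspan_add by (simp add: xs'_def)
          qed
        next
          case b
          have "k' \<in> vspan ?O" using b by (intro vspan_base) auto
          then show ?thesis using b kO vspan_add by (simp add: red_def)
        qed
      qed
      have kN: "k \<in> vspan ?N" by (rule vspan_base) (auto simp: xs'_def)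
      show "?O \<subseteq> vspan ?N"
      proof
        fix x assume "x \<in> ?O"
        then consider (a) i where "i < c" "x = xs i" | (b) "x \<in> set K" by auto
        then show "x \<in> vspan ?N"
        proof cases
          case a
          have xi: "xs' i \<in> vspan ?N" using a by (intro vspan_base) auto
          show ?thesis
          proof (cases "xs i b")
            case True
            then have "x = vadd (xs' i) k" using a by (simp add: xs'_def)
            then show ?thesis using xi kN vspan_add by simp
          next
            case False
            then show ?thesis using a xi by (simp add: xs'_def)
          qed
        next
          case b
          show ?thesis
          proof (cases "x = k")
            case True then show ?thesis using kN by simp
          next
            case False
            then have "x \<in> set (remove1 k K)" using b by (simp add: in_set_remove1)
            then have rx: "red x \<in> vspan ?N" by (intro vspan_base) (auto simp: K'_def)
            show ?thesis
            proof (cases "x b")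
              case True
              then have e: "x = vadd (red x) k" by (simp add: red_def)
              have "vadd (red x) k \<in> vspan ?N" using rx kN by (rule vspan_add)
              then show ?thesis using e by metis
            next
              case False then show ?thesis using rx by (simp add: red_def)
            qed
          qed
        qed
      qed
    qed
  qed
qed


lemma card_vecs: "finite (vecs n) \<and> card (vecs n) = 2 ^ n"
proof -
  have e: "vecs n = (\<lambda>S i. i \<in> S) ` Pow {..<n}"
  proof
    show "vecs n \<subseteq> (\<lambda>S i. i \<in> S) ` Pow {..<n}"
    proof
      fix v assume v: "v \<in> vecs n"
      have "v = (\<lambda>i. i \<in> {i. v i})" by simp
      moreover have "{i. v i} \<in> Pow {..<n}" using v by (auto simp: vecs_def not_less[symmetric])
      ultimately show "v \<in> (\<lambda>S i. i \<in> S) ` Pow {..<n}" by blast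
    qed
  qed (auto simp: vecs_def)
  have "inj_on (\<lambda>S i. i \<in> S) (Pow {..<n})"
    by (rule inj_onI) (simp add: fun_eq_iff set_eq_iff)
  then show ?thesis using e by (simp add: card_image card_Pow)
qed

lemma ac_van:
  assumes "\<forall>l\<in>B. \<not> x l"
  shows "\<not> anticomm_on B p (pX x)" "\<not> anticomm_on B (pX x) p"
        "\<not> anticomm_on B p (pZ x)" "\<not> anticomm_on B (pZ x) p"
proof -
  have e1: "{l\<in>B. Q l \<and> x l} = {}" "{l\<in>B. x l \<and> Q l} = {}" for Q using assms by auto
  show "\<not> anticomm_on B p (pX x)" "\<not> anticomm_on B (pX x) p"
        "\<not> anticomm_on B p (pZ x)" "\<not> anticomm_on B (pZ x) p"
    by (simp_all add: anticomm_on_def pX_def pZ_def vzero_def e1)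
qed

lemma sq_inj: assumes "(x::nat) * x = y * y" shows "x = y"
proof (rule ccontr)
  assume "x \<noteq> y" then have "x < y \<or> y < x" by arith
  then show False using assms mult_strict_mono[of x y x y] mult_strict_mono[of y x y x] by auto
qed

theorem theorem2:
  fixes n k' d :: nat and C :: "bvec set" and P :: "bvec list"
  assumes "binary_code n k' d C"
    and "dual_code n C \<subseteq> C"
    and "parity_check n k' C P"
    and "stabilizer_code n (2 * k' - n) d (css_stabilizer P)"
  shows "\<forall>c::nat. c \<le> n - k' \<longrightarrow>
           (\<exists>B b g h f. eaqec_AB (n - c) (2 * k' - n) d c B b g h f \<and>
              generated (ea_gens (n - c) (2 * k' - n) c g h f) = css_stabilizer P)"
proof (intro allI impI)
  fix c assume hc: "c \<le> n - k'"
  have lin: "linear_code n C" and cardC: "card C = 2 ^ k'" using assms(1) by (auto simp: binary_code_def)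
  have Cv: "C \<subseteq> vecs n" "vzero \<in> C" "\<forall>v\<in>C. \<forall>w\<in>C. vadd v w \<in> C"
    using lin by (auto simp: linear_code_def)
  have lenP: "length P = n - k'" and Pv: "set P \<subseteq> vecs n"
    and Cdef: "C = {v \<in> vecs n. \<forall>r\<in>set P. \<not> bdot n r v}" using assms(3) by (auto simp: parity_check_def)
  define R where "R = vspan (set P)"
  have "{pX r |r. r \<in> set P} \<union> {pZ r |r. r \<in> set P} = pX ` set P \<union> pZ ` set P" by auto
  then have SR: "css_stabilizer P = R \<times> R" unfolding css_stabilizer_def R_def by (simp add: gen_css)
  have PC: "set P \<subseteq> C"
  proof
    fix r assume r: "r \<in> set P"
    have "\<forall>w\<in>C. \<not> bdot n r w"
    proof
      fix w assume "w \<in> C"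
      then have "w \<in> {v \<in> vecs n. \<forall>r\<in>set P. \<not> bdot n r v}" using Cdef by simp
      then show "\<not> bdot n r w" using r by simp
    qed
    then have "r \<in> dual_code n C" using r Pv by (auto simp: dual_code_def)
    then show "r \<in> C" using assms(2) by auto
  qed
  have RC: "R \<subseteq> C" unfolding R_def using vspan_in_code[OF Cv(2) Cv(3) PC] .
  have finC: "finite C" using cardC card_gt_0_iff by fastforce
  have cardR_le: "card R \<le> 2 ^ k'" using card_mono[OF finC RC] cardC by simp
  have "card C \<le> card (vecs n)" using card_mono[OF _ Cv(1)] card_vecs by blast
  then have "(2::nat) ^ k' \<le> 2 ^ n" using card_vecs cardC by simp
  then have k'n: "k' \<le> n" by simp
  have cardS: "card R * card R = 2 ^ (n - (2*k' - n))"
    using assms(4) SR by (simp add: stabilizer_code_def card_cartesian_product)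
  have nk: "n \<le> 2*k'"
  proof (rule ccontr)
    assume a: "\<not> n \<le> 2*k'"
    then have "card R * card R = 2 ^ n" using cardS by simp
    moreover have "card R * card R \<le> 2 ^ k' * 2 ^ k'" using cardR_le by (simp add: mult_le_mono)
    ultimately have "(2::nat) ^ n \<le> 2 ^ (k' + k')" by (simp add: power_add)
    then have "n \<le> k' + k'" by simp
    then show False using a by simp
  qed
  have "n - (2*k' - n) = (n - k') + (n - k')" using nk k'n by arith
  then have "card R * card R = 2 ^ (n - k') * 2 ^ (n - k')" using cardS by (simp add: power_add)
  then have "card R = 2 ^ (n - k')" by (rule sq_inj)
  then have cardR: "card (vspan (set P)) = 2 ^ length P" using lenP by (simp add: R_def)
  have cP: "c \<le> length P" using hc lenP by arith
  obtain bs xs K where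
    E1: "\<forall>i<c. \<forall>j<c. xs i (bs j) = (i = j)" and E2: "\<forall>k\<in>set K. \<forall>j<c. \<not> k (bs j)"
    and E3: "length K = length P - c" and E4: "xs ` {..<c} \<subseteq> vecs n"
    and E5: "set K \<subseteq> vecs n" and E6': "vspan (xs ` {..<c} \<union> set K) = vspan (set P)"
    using elim[OF Pv cardR cP] by (elim exE conjE) blast
  have E6: "vspan (xs ` {..<c} \<union> set K) = R" using E6' by (simp add: R_def)
  define L where "L = length K"
  define B where "B = bs ` {..<c}"
  define g where "g = (\<lambda>i. pZ (xs i))"
  define h where "h = (\<lambda>i. pX (xs i))"
  define f where "f = (\<lambda>j. if j - c < L then pX (K ! (j - c)) else pZ (K ! (j - c - L)))"
  define G where "G = xs ` {..<c} \<union> set K"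
  have N: "n - c + c = n" using hc k'n by arith
  have m: "n - c - (2*k' - n) = c + 2*L" using hc k'n nk E3 lenP unfolding L_def by arith
  have frange: "{f j | j. c \<le> j \<and> j < c + 2*L} = pX ` set K \<union> pZ ` set K"
  proof
    show "{f j | j. c \<le> j \<and> j < c + 2*L} \<subseteq> pX ` set K \<union> pZ ` set K"
    proof
      fix p assume "p \<in> {f j | j. c \<le> j \<and> j < c + 2*L}"
      then obtain j where j: "c \<le> j" "j < c + 2*L" and pj: "p = f j" by blast
      have "f j \<in> pX ` set K \<union> pZ ` set K"
      proof (cases "j - c < L")
        case True then show ?thesis by (simp add: f_def L_def)
      next
        case False
        then have "j - c - L < length K" using j L_def by simp
        then show ?thesis using False by (simp add: f_def)
      qed
      then show "p \<in> pX ` set K \<union> pZ ` set K" using pj by simp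
    qed
    show "pX ` set K \<union> pZ ` set K \<subseteq> {f j | j. c \<le> j \<and> j < c + 2*L}"
    proof
      fix p assume "p \<in> pX ` set K \<union> pZ ` set K"
      then obtain x where x: "x \<in> set K" "p = pX x \<or> p = pZ x" by auto
      then obtain t where t: "t < L" "x = K ! t" by (auto simp: L_def in_set_conv_nth)
      show "p \<in> {f j | j. c \<le> j \<and> j < c + 2*L}"
        using x(2)
      proof
        assume "p = pX x"
        then have "p = f (c + t)" using t by (simp add: f_def)
        then show ?thesis using t by force
      next
        assume "p = pZ x"
        then have "p = f (c + L + t)" using t by (simp add: f_def)
        then show ?thesis using t by force
      qed
    qed
  qed
  have ea: "ea_gens (n - c) (2 * k' - n) c g h f = pX ` G \<union> pZ ` G"
    unfolding ea_gens_def m frange G_def g_def h_def by auto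
  have genEq: "generated (ea_gens (n - c) (2 * k' - n) c g h f) = css_stabilizer P"
    unfolding ea SR gen_css using E6 G_def by simp
  have GR: "G \<subseteq> R" using E6 G_def by (auto intro: vspan_base)
  have zR: "vzero \<in> R" unfolding R_def by (rule vs_zero)
  have gensS: "pX ` G \<union> pZ ` G \<subseteq> css_stabilizer P" using GR zR SR by (auto simp: pX_def pZ_def)
  have comm: "\<forall>s\<in>css_stabilizer P. \<forall>t\<in>css_stabilizer P. \<not> anticomm n s t"
    using assms(4) by (simp add: stabilizer_code_def)
  have bsn: "\<And>i. i < c \<Longrightarrow> bs i < n"
  proof -
    fix i assume i: "i < c"
    have "xs i (bs i)" using E1 i by simp
    moreover have "xs i \<in> vecs n" using E4 i by auto
    ultimately show "bs i < n" by (auto simp: vecs_def not_less[symmetric])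
  qed
  have Bsub: "B \<subseteq> {..<n}" using bsn B_def by auto
  have inj: "inj_on bs {..<c}"
  proof (rule inj_onI)
    fix i j assume "i \<in> {..<c}" "j \<in> {..<c}" "bs i = bs j"
    then show "i = j" using E1 by (metis lessThan_iff)
  qed
  have cardB: "card B = c" using inj B_def by (simp add: card_image)
  have bij: "bij_betw bs {..<c} B" using inj B_def by (simp add: bij_betw_def)
  define A where "A = {..<n} - B"
  have AB: "A \<union> B = {..<n}" "A \<inter> B = {}" "finite A" "finite B" using Bsub A_def B_def by auto
  have key: "\<And>p q. p \<in> css_stabilizer P \<Longrightarrow> q \<in> css_stabilizer P \<Longrightarrow>
      anticomm_on A p q = anticomm_on B p q"
  proof -
    fix p q assume "p \<in> css_stabilizer P" "q \<in> css_stabilizer P"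
    then have "\<not> anticomm_on (A \<union> B) p q" using comm AB(1) by (simp add: anticomm_def)
    then show "anticomm_on A p q = anticomm_on B p q" using anticomm_split[OF AB(2-4)] by simp
  qed
  have xsB: "\<And>i l. i < c \<Longrightarrow> l \<in> B \<Longrightarrow> xs i l = (l = bs i)" using E1 B_def by auto
  have xxB: "\<And>i j. i < c \<Longrightarrow> j < c \<Longrightarrow> {l\<in>B. xs i l \<and> xs j l} = (if i = j then {bs i} else {})"
  proof -
    fix i j assume i: "i < c" and j: "j < c"
    show "{l\<in>B. xs i l \<and> xs j l} = (if i = j then {bs i} else {})"
    proof (cases "i = j")
      case True
      have "bs i \<in> B" using i B_def by simp
      then show ?thesis using True xsB[OF i] by auto
    next
      case False
      have "bs i \<noteq> bs j" using inj False i j by (auto simp: inj_on_def)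
      then show ?thesis using False xsB[OF i] xsB[OF j] by auto
    qed
  qed
  have KB: "\<And>x l. x \<in> set K \<Longrightarrow> l \<in> B \<Longrightarrow> \<not> x l" using E2 B_def by auto
  have van1: "\<And>x Q. x \<in> set K \<Longrightarrow> {l\<in>B. x l \<and> Q l} = {}" using KB by auto
  have van2: "\<And>x Q. x \<in> set K \<Longrightarrow> {l\<in>B. Q l \<and> x l} = {}" using KB by auto
  have fK: "\<And>j. c \<le> j \<and> j < c + 2*L \<Longrightarrow> \<exists>x\<in>set K. f j = pX x \<or> f j = pZ x"
    using frange by blast
  have gS: "\<And>i. i < c \<Longrightarrow> g i \<in> css_stabilizer P" using gensS G_def g_def by auto
  have hS: "\<And>i. i < c \<Longrightarrow> h i \<in> css_stabilizer P" using gensS G_def h_def by auto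
  have fS: "\<And>j. c \<le> j \<and> j < c + 2*L \<Longrightarrow> f j \<in> css_stabilizer P" 
  proof -
    fix j assume j: "c \<le> j \<and> j < c + 2*L"
    obtain x where x: "x \<in> set K" "f j = pX x \<or> f j = pZ x" using fK[OF j] by blast
    have "x \<in> G" using x(1) G_def by simp
    then have "f j \<in> pX ` G \<union> pZ ` G" using x(2) by blast
    then show "f j \<in> css_stabilizer P" using gensS by blast
  qed
  have fB1: "\<And>j p. c \<le> j \<and> j < c + 2*L \<Longrightarrow> \<not> anticomm_on B p (f j) \<and> \<not> anticomm_on B (f j) p"
  proof -
    fix j p assume j: "c \<le> j \<and> j < c + 2*L"
    obtain x where x: "x \<in> set K" "f j = pX x \<or> f j = pZ x" using fK[OF j] by blast
    have v: "\<forall>l\<in>B. \<not> x l" using KB x(1) by blast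
    from x(2) show "\<not> anticomm_on B p (f j) \<and> \<not> anticomm_on B (f j) p"
    proof
      assume "f j = pX x" then show ?thesis using ac_van(1,2)[OF v, of p] by simp
    next
      assume "f j = pZ x" then show ?thesis using ac_van(3,4)[OF v, of p] by simp
    qed
  qed
  show "\<exists>B b g h f. eaqec_AB (n - c) (2 * k' - n) d c B b g h f \<and>
              generated (ea_gens (n - c) (2 * k' - n) c g h f) = css_stabilizer P"
  proof (intro exI conjI)
    show "generated (ea_gens (n - c) (2 * k' - n) c g h f) = css_stabilizer P" by (rule genEq)
    show "eaqec_AB (n - c) (2 * k' - n) d c B bs g h f"
      unfolding eaqec_AB_def Let_def m N A_def[symmetric]
    proof (intro conjI)
      show "2 * k' - n + c \<le> n - c" using hc nk k'n by arith
      show "B \<subseteq> {..<n}" by (rule Bsub)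
      show "card B = c" by (rule cardB)
      show "bij_betw bs {..<c} B" by (rule bij)
      show "ea_gens (n - c) (2 * k' - n) c g h f \<subseteq> paulis n"
      proof -
        have "R \<subseteq> vecs n" using RC Cv(1) by auto
        then have "G \<subseteq> vecs n" using GR by auto
        then show ?thesis unfolding ea paulis_def using vzero_vecs by (auto simp: pX_def pZ_def)
      qed
      show "\<forall>i<c. prestrict B (g i) = pZ (\<lambda>l. l = bs i) \<and> prestrict B (h i) = pX (\<lambda>l. l = bs i)"
        using xsB B_def by (auto simp: prestrict_def g_def h_def pX_def pZ_def vzero_def fun_eq_iff)
      show "\<forall>j. c \<le> j \<and> j < c + 2 * L \<longrightarrow> prestrict B (f j) = pI"
      proof (intro allI impI)
        fix j assume j: "c \<le> j \<and> j < c + 2 * L"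
        obtain x where x: "x \<in> set K" "f j = pX x \<or> f j = pZ x" using fK[OF j] by blast
        have v: "\<forall>l\<in>B. \<not> x l" using KB x(1) by blast
        then show "prestrict B (f j) = pI" using x(2)
          by (auto simp: prestrict_def pX_def pZ_def pI_def vzero_def fun_eq_iff)
      qed
      show "\<forall>i<c. anticomm_on A (g i) (h i)"
      proof (intro allI impI)
        fix i assume i: "i < c"
        have "anticomm_on B (g i) (h i)" using xxB[OF i i] by (simp add: g_def h_def)
        then show "anticomm_on A (g i) (h i)" using key[OF gS[OF i] hS[OF i]] by simp
      qed
      show "\<forall>i<c. \<forall>j<c. \<not> anticomm_on A (g i) (g j) \<and> \<not> anticomm_on A (h i) (h j) \<and>
                     (i \<noteq> j \<longrightarrow> \<not> anticomm_on A (g i) (h j))"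
      proof (intro allI impI conjI)
        fix i j assume i: "i < c" and j: "j < c"
        have "\<not> anticomm_on B (g i) (g j)" by (simp add: g_def)
        then show "\<not> anticomm_on A (g i) (g j)" using key[OF gS[OF i] gS[OF j]] by simp
        have "\<not> anticomm_on B (h i) (h j)" by (simp add: h_def)
        then show "\<not> anticomm_on A (h i) (h j)" using key[OF hS[OF i] hS[OF j]] by simp
        assume ij: "i \<noteq> j"
        have e: "{l\<in>B. xs i l \<and> xs j l} = {}" using xxB[OF i j] ij by simp
        have "\<not> anticomm_on B (g i) (h j)" unfolding g_def h_def ac_ZX e by simp
        then show "\<not> anticomm_on A (g i) (h j)" using key[OF gS[OF i] hS[OF j]] by simp
      qed
      show "\<forall>i<c. \<forall>j. c \<le> j \<and> j < c + 2 * L \<longrightarrow>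
                 \<not> anticomm_on A (g i) (f j) \<and> \<not> anticomm_on A (h i) (f j)"
      proof (intro allI impI conjI)
        fix i j assume i: "i < c" and j: "c \<le> j \<and> j < c + 2 * L"
        have "\<not> anticomm_on B (g i) (f j)" using fB1[OF j, of "g i"] by blast
        then show "\<not> anticomm_on A (g i) (f j)" using key[OF gS[OF i] fS[OF j]] by simp
        have "\<not> anticomm_on B (h i) (f j)" using fB1[OF j, of "h i"] by blast
        then show "\<not> anticomm_on A (h i) (f j)" using key[OF hS[OF i] fS[OF j]] by simp
      qed
      show "\<forall>i j. c \<le> i \<and> i < c + 2 * L \<and> c \<le> j \<and> j < c + 2 * L \<longrightarrow> \<not> anticomm_on A (f i) (f j)"
      proof (intro allI impI)
        fix i j assume ij: "c \<le> i \<and> i < c + 2 * L \<and> c \<le> j \<and> j < c + 2 * L"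
        then have i: "c \<le> i \<and> i < c + 2 * L" and j: "c \<le> j \<and> j < c + 2 * L" by auto
        have "\<not> anticomm_on B (f i) (f j)" using fB1[OF j, of "f i"] by blast
        then show "\<not> anticomm_on A (f i) (f j)" using key[OF fS[OF i] fS[OF j]] by simp
      qed
      show "stabilizer_code n (2 * k' - n) d (generated (ea_gens (n - c) (2 * k' - n) c g h f))"
        using genEq assms(4) by simp
    qed
  qed
qed

end
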